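(* In the even setting below, assume $N_k$ is invertible and let $c_k^0,\dots,c_k^{m-1}$ be the $n\times n$ blocks of the unique $mn\times n$ matrix $C_k=(c_k^0;\dots;c_k^{m-1})$ with $N_kC_k=F^{(k)}_{m}$. Then each $c_k^i$ is homogeneous (all entries being rational functions homogeneous of the same degree) with respect to the scaling $a_j^{2r+1}\mapsto\mu a_j^{2r+1}$, $a_j^{2r}\mapsto a_j^{2r}$, and $\deg c_k^{2\ell}=0$, $\deg c_k^{2\ell+1}=1$ for $\ell=0,\dots,s-1$.
   Context: Even setting: integers $n\ge1$, $s\ge 2$, $m=2s$. For each $k\in\mathbb Z$ let $a_k^0,\dots,a_k^{m-1}$ be $n\times n$ matrices with indeterminate entries, $N$-periodic in $k$. $Q_k$ is the $mn\times mn$ block matrix with $I_n$ in blocks $(i+1,i)$, last block column $(a_k^0;\dots;a_k^{m-1})$, $O_n$ elsewhere. $r_k=(O_n;a_k^1;O_n;a_k^3;\dots;O_n;a_k^{2s-1})$. $F^{(k)}_0=r_k$, $F^{(k)}_\ell=Q_k\cdots Q_{k+\ell-1}r_{k+\ell}$, $N_k=(F^{(k)}_0,\dots,F^{(k)}_{m-1})$. A rational function $f$ of the entries is homogeneous of degree $d$ if applying the scaling multiplies it by $\mu^d$ for all $\mu\ne0$. (The blocks $c_k^i$ are the coordinates of the map $\bar T(V_k)=(V_k,\dots,V_{k+m-1})r_k$ before normalization.) *)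

theory Defs
  imports "Jordan_Normal_Form.Matrix"
begin

text \<open>Coefficient data: a k i is the n x n block a_k^i (k an integer index, i < m).
  Matrices over an arbitrary field; the "indeterminate" statement about rational functions
  is rendered as the corresponding identity for every evaluation in every field.\<close>

definition Qmat :: "nat \<Rightarrow> nat \<Rightarrow> (int \<Rightarrow> nat \<Rightarrow> 'a::field mat) \<Rightarrow> int \<Rightarrow> 'a mat" where
  "Qmat n m a k = mat (m*n) (m*n) (\<lambda>(r,c).
     if c div n = m - 1 then a k (r div n) $$ (r mod n, c mod n)
     else if r div n = c div n + 1 \<and> r mod n = c mod n then 1 else 0)"

definition rvec :: "nat \<Rightarrow> nat \<Rightarrow> (int \<Rightarrow> nat \<Rightarrow> 'a::field mat) \<Rightarrow> int \<Rightarrow> 'a mat" where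
  "rvec n m a k = mat (m*n) n (\<lambda>(r,c).
     if odd (r div n) then a k (r div n) $$ (r mod n, c) else 0)"

fun Qprod :: "nat \<Rightarrow> nat \<Rightarrow> (int \<Rightarrow> nat \<Rightarrow> 'a::field mat) \<Rightarrow> int \<Rightarrow> nat \<Rightarrow> 'a mat" where
  "Qprod n m a k 0 = 1\<^sub>m (m*n)"
| "Qprod n m a k (Suc l) = Qprod n m a k l * Qmat n m a (k + int l)"

definition Fmat :: "nat \<Rightarrow> nat \<Rightarrow> (int \<Rightarrow> nat \<Rightarrow> 'a::field mat) \<Rightarrow> int \<Rightarrow> nat \<Rightarrow> 'a mat" where
  "Fmat n m a k l = Qprod n m a k l * rvec n m a (k + int l)"

text \<open>N_k = (F_0, ..., F_{m-1}), block column l is F_l.\<close>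
definition Nmat :: "nat \<Rightarrow> nat \<Rightarrow> (int \<Rightarrow> nat \<Rightarrow> 'a::field mat) \<Rightarrow> int \<Rightarrow> 'a mat" where
  "Nmat n m a k = mat (m*n) (m*n) (\<lambda>(r,c). Fmat n m a k (c div n) $$ (r, c mod n))"

definition blk :: "nat \<Rightarrow> 'a mat \<Rightarrow> nat \<Rightarrow> 'a mat" where
  "blk n C i = mat n n (\<lambda>(p,q). C $$ (i*n + p, q))"

definition scale_odd :: "'a::field \<Rightarrow> (int \<Rightarrow> nat \<Rightarrow> 'a mat) \<Rightarrow> int \<Rightarrow> nat \<Rightarrow> 'a mat" where
  "scale_odd \<mu> a j i = (if odd i then \<mu> \<cdot>\<^sub>m a j i else a j i)"

end

theory Submission
  imports Defs "Jordan_Normal_Form.Determinant"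
begin

lemma sum_blocks: "(\<Sum>t<m*n. f t) = (\<Sum>i<m. \<Sum>p<n. (f::nat\<Rightarrow>'a::comm_monoid_add) (i*n+p))"
proof (induction m)
  case 0 then show ?case by simp
next
  case (Suc m)
  have "{..<Suc m * n} = {..<m*n} \<union> {m*n..<m*n+n}" by auto
  then have "(\<Sum>t<Suc m*n. f t) = (\<Sum>t<m*n. f t) + (\<Sum>t\<in>{m*n..<m*n+n}. f t)"
    by (simp add: sum.union_disjoint ivl_disj_int)
  also have "(\<Sum>t\<in>{m*n..<m*n+n}. f t) = (\<Sum>p<n. f (m*n+p))"
    using sum.shift_bounds_nat_ivl[of f 0 "m*n" n] by (simp add: atLeast0LessThan add.commute)
  finally show ?case using Suc by simp
qed
lemma sum_parity: "(\<Sum>j<2*m. f j) = (\<Sum>q<m. f (2*q)) + (\<Sum>q<m. (f::nat\<Rightarrow>'a::comm_monoid_add) (2*q+1))"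
  by (induction m) (simp_all add: ac_simps)



lemma mult_entry: "A \<in> carrier_mat nr nk \<Longrightarrow> B \<in> carrier_mat nk nc \<Longrightarrow> i < nr \<Longrightarrow> j < nc \<Longrightarrow>
  (A*B) $$ (i,j) = (\<Sum>t<nk. A $$ (i,t) * B $$ (t,j))"
  by (auto simp: scalar_prod_def atLeast0LessThan intro!: sum.cong)

lemma Qmat_carrier[simp]: "Qmat n m a k \<in> carrier_mat (m*n) (m*n)" by (simp add: Qmat_def)
lemma Qprod_carrier[simp]: "Qprod n m a k l \<in> carrier_mat (m*n) (m*n)" by (induction l) auto
lemma rvec_carrier[simp]: "rvec n m a k \<in> carrier_mat (m*n) n" by (simp add: rvec_def)

lemma Qmat_idx: "r<m*n \<Longrightarrow> c<m*n \<Longrightarrow> Qmat n m a k $$ (r,c) = (if c div n = m - 1 then a k (r div n) $$ (r mod n, c mod n)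
     else if r div n = c div n + 1 \<and> r mod n = c mod n then 1 else 0)"
  by (simp add: Qmat_def)

lemma blk_lt: "i < m \<Longrightarrow> p < n \<Longrightarrow> i*n+p < m*(n::nat)"
proof -
  assume "i<m" "p<n"
  then have "i*n+p < Suc i * n" by simp
  also have "Suc i * n \<le> m*n" using \<open>i<m\<close> by (intro mult_le_mono1) simp
  finally show ?thesis .
qed

lemma divmod_blk: "p<n \<Longrightarrow> (j*n+p) div n = j \<and> (j*n+p) mod (n::nat) = p" by auto

lemma Qprod_shift: assumes "r<m*n" "Suc i<m" "p<n"
  shows "Qprod n m a k l $$ (r, Suc i*n+p) = Qprod n m a k (Suc l) $$ (r, i*n+p)"
proof -
  have ipn: "i*n+p < m*n" using blk_lt[of i m p n] assms by simp
  have sp: "Suc i*n+p < m*n" using blk_lt[of "Suc i" m p n] assms by simp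
  have "Qprod n m a k (Suc l) $$ (r,i*n+p) = (\<Sum>t<m*n. Qprod n m a k l $$ (r,t) * Qmat n m a (k+int l) $$ (t, i*n+p))"
    using assms ipn by (simp only: Qprod.simps, intro mult_entry[where nr="m*n" and nk="m*n" and nc="m*n"]) auto
  also have "\<dots> = (\<Sum>t<m*n. if t = Suc i*n+p then Qprod n m a k l $$ (r,t) else 0)"
  proof (rule sum.cong)
    fix t assume "t \<in> {..<m*n}"
    then have t: "t < m*n" by simp
    have d: "(i*n+p) div n = i" "(i*n+p) mod n = p" using assms by auto
    have "(t div n = Suc i \<and> t mod n = p) = (t = Suc i*n+p)"
    proof
      assume "t div n = Suc i \<and> t mod n = p"
      then show "t = Suc i*n+p" by (metis div_mult_mod_eq mult.commute)
    qed (use assms divmod_blk[of p n "Suc i"] in auto)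
    then show "Qprod n m a k l $$ (r,t) * Qmat n m a (k+int l) $$ (t, i*n+p) = (if t = Suc i*n+p then Qprod n m a k l $$ (r,t) else 0)"
      using assms t ipn d divmod_blk[of p n "Suc i"] by (auto simp: Qmat_idx)
  qed simp
  also have "\<dots> = Qprod n m a k l $$ (r, Suc i*n+p)" using sp by simp
  finally show ?thesis by simp
qed

lemma Qprod_col: "r<m*n \<Longrightarrow> i<m \<Longrightarrow> p<n \<Longrightarrow> Qprod n m a k l $$ (r, i*n+p) = Qprod n m a k (l+i) $$ (r,p)"
proof (induction i arbitrary: l)
  case 0 then show ?case by simp
next
  case (Suc i)
  then show ?case using Qprod_shift[of r m n i p a k l] Suc.IH[of "Suc l"] by simp
qed

lemma Qprod_last: assumes "r<m*n" "p<n" "0<m"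
  shows "Qprod n m a k (l+m) $$ (r,p) = (\<Sum>i<m. \<Sum>q<n. Qprod n m a k (l+i) $$ (r,q) * a (k+int l) i $$ (q,p))"
proof -
  have c: "(m-1)*n+p < m*n" using blk_lt[of "m-1" m p n] assms by simp
  have "Qprod n m a k (l+m) $$ (r,p) = Qprod n m a k (Suc l) $$ (r,(m-1)*n+p)"
    using Qprod_col[of r m n "m-1" p a k "Suc l"] assms by simp
  also have "\<dots> = (\<Sum>t<m*n. Qprod n m a k l $$ (r,t) * Qmat n m a (k+int l) $$ (t, (m-1)*n+p))"
    using assms c by (simp only: Qprod.simps, intro mult_entry[where nr="m*n" and nk="m*n" and nc="m*n"]) auto
  also have "\<dots> = (\<Sum>t<m*n. Qprod n m a k l $$ (r,t) * a (k+int l) (t div n) $$ (t mod n, p))"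
    using assms c by (intro sum.cong) (auto simp: Qmat_idx)
  also have "\<dots> = (\<Sum>i<m. \<Sum>q<n. Qprod n m a k l $$ (r,i*n+q) * a (k+int l) i $$ (q, p))"
    using assms by (subst sum_blocks) (intro sum.cong; simp)
  also have "\<dots> = (\<Sum>i<m. \<Sum>q<n. Qprod n m a k (l+i) $$ (r,q) * a (k+int l) i $$ (q,p))"
    using assms by (intro sum.cong) (simp_all add: Qprod_col)
  finally show ?thesis .
qed

lemma Fmat_entry: assumes "r<m*n" "c<n"
  shows "Fmat n m a k l $$ (r,c) = (\<Sum>i<m. \<Sum>q<n. Qprod n m a k (l+i) $$ (r,q) * (if odd i then a (k+int l) i $$ (q,c) else 0))"
proof -
  have "Fmat n m a k l $$ (r,c) = (\<Sum>t<m*n. Qprod n m a k l $$ (r,t) * rvec n m a (k+int l) $$ (t,c))"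
    using assms by (simp only: Fmat_def, intro mult_entry[where nr="m*n" and nk="m*n" and nc="n"]) auto
  also have "\<dots> = (\<Sum>i<m. \<Sum>q<n. Qprod n m a k l $$ (r,i*n+q) * rvec n m a (k+int l) $$ (i*n+q,c))"
    by (rule sum_blocks)
  also have "\<dots> = (\<Sum>i<m. \<Sum>q<n. Qprod n m a k (l+i) $$ (r,q) * (if odd i then a (k+int l) i $$ (q,c) else 0))"
    using assms by (intro sum.cong) (auto simp: Qprod_col rvec_def blk_lt)
  finally show ?thesis .
qed



definition cf :: "nat \<Rightarrow> nat \<Rightarrow> (int \<Rightarrow> nat \<Rightarrow> 'a::field mat) \<Rightarrow> int \<Rightarrow> nat \<Rightarrow> nat \<Rightarrow> nat \<Rightarrow> nat \<Rightarrow> 'a" where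
  "cf n m a k l j p c = (if l \<le> j \<and> j < l+m \<and> odd (j-l) then a (k+int l) (j-l) $$ (p,c) else 0)"
definition cg :: "nat \<Rightarrow> nat \<Rightarrow> (int \<Rightarrow> nat \<Rightarrow> 'a::field mat) \<Rightarrow> int \<Rightarrow> nat \<Rightarrow> nat \<Rightarrow> nat \<Rightarrow> nat \<Rightarrow> 'a" where
  "cg n m a k l j p c = (if j = l+m then (if p = c then 1 else 0)
     else if l \<le> j \<and> j < l+m \<and> even (j-l) then - a (k+int l) (j-l) $$ (p,c) else 0)"
definition rho :: "nat \<Rightarrow> nat \<Rightarrow> (int \<Rightarrow> nat \<Rightarrow> 'a::field mat) \<Rightarrow> int \<Rightarrow> nat \<Rightarrow> nat \<Rightarrow> nat \<Rightarrow> 'a" where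
  "rho n m a k l t c = (if even l then cf n m a k l (2*(t div n)+1) (t mod n) c
                        else cg n m a k l (2*(t div n)+1) (t mod n) c)"
definition Zodd :: "nat \<Rightarrow> nat \<Rightarrow> (int \<Rightarrow> nat \<Rightarrow> 'a::field mat) \<Rightarrow> int \<Rightarrow> 'a mat" where
  "Zodd n m a k = mat (m*n) (m*n) (\<lambda>(r,t). Qprod n m a k (2*(t div n)+1) $$ (r, t mod n))"

lemma shift_sum: "(l::nat) + m \<le> M \<Longrightarrow> (\<Sum>i<m. g (l+i)) = (\<Sum>j<M. if l \<le> j \<and> j < l+m then g j else (0::'a::comm_monoid_add))"
proof -
  assume "l+m \<le> M"
  then have e: "{..<M} \<inter> {j. l \<le> j \<and> j < l+m} = {l..<l+m}" by (auto intro: less_le_trans)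
  have "(\<Sum>j<M. if l \<le> j \<and> j < l+m then g j else 0) = sum g {l..<l+m}"
    using sum.inter_restrict[of "{..<M}" g "{j. l \<le> j \<and> j < l+m}"] e by simp
  also have "\<dots> = (\<Sum>i<m. g (l+i))"
    using sum.shift_bounds_nat_ivl[of g 0 l m] by (simp add: atLeast0LessThan add.commute)
  finally show ?thesis by simp
qed

lemma F_cf: assumes "l \<le> m" "r<m*n" "c<n"
  shows "Fmat n m a k l $$ (r,c) = (\<Sum>j<2*m. \<Sum>q<n. Qprod n m a k j $$ (r,q) * cf n m a k l j q c)"
proof -
  let ?g = "\<lambda>j. \<Sum>q<n. Qprod n m a k j $$ (r,q) * (if odd (j-l) then a (k+int l) (j-l) $$ (q,c) else 0)"
  have "Fmat n m a k l $$ (r,c) = (\<Sum>i<m. ?g (l+i))" using assms by (simp add: Fmat_entry cong: if_cong)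
  also have "\<dots> = (\<Sum>j<2*m. if l \<le> j \<and> j < l+m then ?g j else 0)"
    using assms by (intro shift_sum) simp
  also have "\<dots> = (\<Sum>j<2*m. \<Sum>q<n. Qprod n m a k j $$ (r,q) * cf n m a k l j q c)"
    by (intro sum.cong) (auto simp: cf_def)
  finally show ?thesis .
qed

lemma F_cg: assumes "odd l" "l < m" "r<m*n" "c<n"
  shows "Fmat n m a k l $$ (r,c) = (\<Sum>j<2*m. \<Sum>q<n. Qprod n m a k j $$ (r,q) * cg n m a k l j q c)"
proof -
  let ?h = "\<lambda>j. \<Sum>q<n. Qprod n m a k j $$ (r,q) * (if even (j-l) then - a (k+int l) (j-l) $$ (q,c) else 0)"
  have m0: "0<m" using assms by simp
  have "Fmat n m a k l $$ (r,c) = (\<Sum>i<m. \<Sum>q<n. Qprod n m a k (l+i) $$ (r,q) * a (k+int l) i $$ (q,c))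
       + (\<Sum>i<m. ?h (l+i))"
    using assms by (simp add: Fmat_entry sum.distrib[symmetric] algebra_simps cong: if_cong) (intro sum.cong, auto simp: algebra_simps)
  also have "(\<Sum>i<m. \<Sum>q<n. Qprod n m a k (l+i) $$ (r,q) * a (k+int l) i $$ (q,c)) = Qprod n m a k (l+m) $$ (r,c)"
    using Qprod_last[where r=r and m=m and n=n and p=c and l=l and a=a and k=k] assms by simp
  also have "\<dots> = (\<Sum>j<2*m. \<Sum>q<n. Qprod n m a k j $$ (r,q) * (if j = l+m then (if q = c then 1 else 0) else 0))"
  proof -
    have "(\<Sum>j<2*m. \<Sum>q<n. Qprod n m a k j $$ (r,q) * (if j = l+m then (if q = c then 1 else 0) else 0))
        = (\<Sum>j<2*m. if j = l+m then (\<Sum>q<n. Qprod n m a k j $$ (r,q) * (if q = c then 1 else 0)) else 0)"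
      by (intro sum.cong) auto
    also have "\<dots> = (\<Sum>q<n. Qprod n m a k (l+m) $$ (r,q) * (if q = c then 1 else 0))"
      using assms by simp
    also have "\<dots> = Qprod n m a k (l+m) $$ (r,c)" using assms by (simp add: if_distrib cong: if_cong)
    finally show ?thesis by simp
  qed
  also have "(\<Sum>i<m. ?h (l+i)) = (\<Sum>j<2*m. if l \<le> j \<and> j < l+m then ?h j else 0)"
    using assms by (intro shift_sum) simp
  also have "(\<Sum>j<2*m. \<Sum>q<n. Qprod n m a k j $$ (r,q) * (if j = l+m then (if q = c then 1 else 0) else 0))
      + (\<Sum>j<2*m. if l \<le> j \<and> j < l+m then ?h j else 0)
      = (\<Sum>j<2*m. \<Sum>q<n. Qprod n m a k j $$ (r,q) * cg n m a k l j q c)"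
    by (simp add: sum.distrib[symmetric], intro sum.cong) (auto simp: cg_def sum.distrib[symmetric] algebra_simps intro!: sum.cong)
  finally show ?thesis .
qed

lemma odd_collapse: assumes "\<And>j q. even j \<Longrightarrow> X j q = 0" "r < m*n"
  shows "(\<Sum>j<2*m. \<Sum>q<n. Qprod n m a k j $$ (r,q) * X j q) = (\<Sum>t<m*n. Zodd n m a k $$ (r,t) * X (2*(t div n)+1) (t mod n))"
proof -
  have "(\<Sum>j<2*m. \<Sum>q<n. Qprod n m a k j $$ (r,q) * X j q) = (\<Sum>i<m. \<Sum>q<n. Qprod n m a k (2*i+1) $$ (r,q) * X (2*i+1) q)"
    by (subst sum_parity) (simp add: assms)
  also have "\<dots> = (\<Sum>t<m*n. Zodd n m a k $$ (r,t) * X (2*(t div n)+1) (t mod n))"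
    by (subst sum_blocks) (intro sum.cong, auto simp: Zodd_def assms blk_lt)
  finally show ?thesis .
qed

lemma F_Z: assumes "even m" "l \<le> m" "r<m*n" "c<n"
  shows "Fmat n m a k l $$ (r,c) = (\<Sum>t<m*n. Zodd n m a k $$ (r,t) * rho n m a k l t c)"
proof (cases "even l")
  case True
  have "Fmat n m a k l $$ (r,c) = (\<Sum>j<2*m. \<Sum>q<n. Qprod n m a k j $$ (r,q) * cf n m a k l j q c)"
    using assms by (simp add: F_cf)
  also have "\<dots> = (\<Sum>t<m*n. Zodd n m a k $$ (r,t) * cf n m a k l (2*(t div n)+1) (t mod n) c)"
    by (rule odd_collapse) (use True assms in \<open>auto simp: cf_def\<close>)
  finally show ?thesis using True by (simp add: rho_def)
next
  case False
  then have lm: "l < m" using assms by (cases "l = m") auto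
  have "Fmat n m a k l $$ (r,c) = (\<Sum>j<2*m. \<Sum>q<n. Qprod n m a k j $$ (r,q) * cg n m a k l j q c)"
    using assms False lm by (simp add: F_cg)
  also have "\<dots> = (\<Sum>t<m*n. Zodd n m a k $$ (r,t) * cg n m a k l (2*(t div n)+1) (t mod n) c)"
    by (rule odd_collapse) (use False assms in \<open>auto simp: cg_def\<close>)
  finally show ?thesis using False by (simp add: rho_def)
qed



lemma inv_det: assumes "A \<in> carrier_mat N N" "invertible_mat (A::'a::field mat)" shows "det A \<noteq> 0"
proof -
  from assms(2) obtain B where AB: "A * B = 1\<^sub>m (dim_row A)" and BA: "B * A = 1\<^sub>m (dim_row B)"
    unfolding invertible_mat_def inverts_mat_def by blast
  have "dim_col B = N" using arg_cong[OF AB, of dim_col] assms(1) by simp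
  moreover have "dim_row B = N" using arg_cong[OF BA, of dim_col] assms(1) by simp
  ultimately have B: "B \<in> carrier_mat N N" by auto
  have "det A * det B = 1" using det_mult[OF assms(1) B] AB assms(1) by simp
  then show ?thesis by auto
qed

lemma det_inv: assumes "A \<in> carrier_mat N N" "det (A::'a::field mat) \<noteq> 0" shows "invertible_mat A"
proof -
  from det_non_zero_imp_unit[OF assms, of "()"]
  obtain B where B: "B \<in> carrier_mat N N" "B * A = 1\<^sub>m N" "A * B = 1\<^sub>m N"
    unfolding Units_def by (auto simp: ring_mat_def)
  then show ?thesis using assms(1) unfolding invertible_mat_def inverts_mat_def square_mat.simps by auto
qed

lemma inv_cancel: assumes "A \<in> carrier_mat N N" "invertible_mat (A::'a::field mat)"
  "X \<in> carrier_mat N M" "Y \<in> carrier_mat N M" "A * X = A * Y" shows "X = Y"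
proof -
  from assms(2) obtain B where BA: "B * A = 1\<^sub>m (dim_row B)" and AB: "A * B = 1\<^sub>m (dim_row A)"
    unfolding invertible_mat_def inverts_mat_def by blast
  have "dim_col B = N" using arg_cong[OF AB, of dim_col] assms(1) by simp
  moreover have "dim_row B = N" using arg_cong[OF BA, of dim_col] assms(1) by simp
  ultimately have B: "B \<in> carrier_mat N N" by auto
  have "X = (B * A) * X" using BA B assms by simp
  also have "\<dots> = B * (A * X)" using B assms by (simp add: assoc_mult_mat)
  also have "\<dots> = B * (A * Y)" using assms by simp
  also have "\<dots> = (B * A) * Y" using B assms by (simp add: assoc_mult_mat)
  also have "\<dots> = Y" using BA B assms by simp
  finally show ?thesis .
qed

lemma scale_entry: assumes "\<And>j i. i < m \<Longrightarrow> a j i \<in> carrier_mat n n" "i < m" "p < n" "q < n"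
  shows "scale_odd \<mu> a j i $$ (p,q) = (if odd i then \<mu> else 1) * a j i $$ (p,q)"
proof -
  have "a j i \<in> carrier_mat n n" using assms(1) assms(2) by blast
  then have d: "dim_row (a j i) = n" "dim_col (a j i) = n" by auto
  show ?thesis using assms(3,4) d by (simp add: scale_odd_def)
qed

lemma rho_scale: assumes "\<And>j i. i < m \<Longrightarrow> a j i \<in> carrier_mat n n" "t < m*n" "c < n"
  shows "rho n m (scale_odd \<mu> a) k l t c = (if even l then \<mu> else 1) * rho n m a k l t c"
proof -
  have tn: "t mod n < n" using assms(2) by (cases "n = 0") auto
  show ?thesis
    using assms tn scale_entry[OF assms(1), where p="t mod n" and q=c and \<mu>=\<mu>]
    by (auto simp: rho_def cf_def cg_def)
qed

lemma V_rec: assumes "q<n" "0<m"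
  shows "(\<Sum>r<m*n. v r * Qprod n m a k (j+m) $$ (r,q))
       = (\<Sum>i<m. \<Sum>p<n. (\<Sum>r<m*n. v r * Qprod n m a k (j+i) $$ (r,p)) * a (k+int j) i $$ (p,q))"
proof -
  have "(\<Sum>r<m*n. v r * Qprod n m a k (j+m) $$ (r,q))
      = (\<Sum>r<m*n. v r * (\<Sum>i<m. \<Sum>p<n. Qprod n m a k (j+i) $$ (r,p) * a (k+int j) i $$ (p,q)))"
    using assms by (intro sum.cong refl) (simp add: Qprod_last)
  also have "\<dots> = (\<Sum>r<m*n. \<Sum>i<m. \<Sum>p<n. v r * Qprod n m a k (j+i) $$ (r,p) * a (k+int j) i $$ (p,q))"
    by (simp add: sum_distrib_left mult.assoc)
  also have "\<dots> = (\<Sum>i<m. \<Sum>p<n. \<Sum>r<m*n. v r * Qprod n m a k (j+i) $$ (r,p) * a (k+int j) i $$ (p,q))"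
    by (subst sum.swap, rule sum.cong[OF refl], rule sum.swap)
  also have "\<dots> = (\<Sum>i<m. \<Sum>p<n. (\<Sum>r<m*n. v r * Qprod n m a k (j+i) $$ (r,p)) * a (k+int j) i $$ (p,q))"
    by (simp add: sum_distrib_right)
  finally show ?thesis .
qed

lemma V_base: assumes "j < m" "q < n" "r < m*n"
  shows "Qprod n m a k j $$ (r,q) = Qprod n m b k j $$ (r,q)"
  using Qprod_col[where r=r and m=m and n=n and i=j and p=q and a=a and k=k and l=0]
    Qprod_col[where r=r and m=m and n=n and i=j and p=q and a=b and k=k and l=0] assms by simp



lemma Zodd_carrier[simp]: "Zodd n m a k \<in> carrier_mat (m*n) (m*n)" by (simp add: Zodd_def)
lemma Zodd_dims[simp]: "dim_row (Zodd n m a k) = m*n" "dim_col (Zodd n m a k) = m*n" by (simp_all add: Zodd_def)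

lemma Z_nonsing:
  assumes carr: "\<And>j i. i < m \<Longrightarrow> a j i \<in> carrier_mat n n"
    and ev: "even m" and m0: "0<m" and n0: "0<n" and mu: "\<mu> \<noteq> 0"
    and dZ: "det (Zodd n m a k) \<noteq> 0"
  shows "det (Zodd n m (scale_odd \<mu> a) k) \<noteq> 0"
proof
  let ?b = "scale_odd \<mu> a"
  let ?Z' = "Zodd n m ?b k" and ?Z = "Zodd n m a k"
  assume "det ?Z' = 0"
  then have "det (transpose_mat ?Z') = 0" using det_transpose[OF Zodd_carrier[of n m ?b k]] by simp
  then obtain v where v: "v \<in> carrier_vec (m*n)" "v \<noteq> 0\<^sub>v (m*n)" "transpose_mat ?Z' *\<^sub>v v = 0\<^sub>v (m*n)"
    using det_0_iff_vec_prod_zero_field[of "transpose_mat ?Z'" "m*n"] by auto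
  have ker: "(\<Sum>r<m*n. v$r * ?Z' $$ (r,t)) = 0" if "t < m*n" for t
  proof -
    have "(transpose_mat ?Z' *\<^sub>v v) $ t = (\<Sum>r<m*n. v$r * ?Z' $$ (r,t))"
      using v(1) that by (auto simp: scalar_prod_def atLeast0LessThan mult.commute intro!: sum.cong)
    moreover have "(transpose_mat ?Z' *\<^sub>v v) $ t = 0" using v(3) that by simp
    ultimately show ?thesis by simp
  qed
  define V where "V b j q = (\<Sum>r<m*n. v$r * Qprod n m b k j $$ (r,q))" for b j q
  have zero: "V ?b j q = 0" if "odd j" "j < 2*m" "q < n" for j q
  proof -
    obtain h where h: "j = 2*h+1" using \<open>odd j\<close> oddE by blast
    have hm: "h < m" using that h by simp
    have t: "h*n + q < m*n" using hm that by (intro blk_lt) auto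
    have "V ?b j q = (\<Sum>r<m*n. v$r * ?Z' $$ (r,h*n + q))"
      unfolding V_def h using that t divmod_blk[of q n h] by (intro sum.cong refl) (simp add: Zodd_def del: Qprod.simps)
    then show ?thesis using ker t by simp
  qed
  have eq: "\<forall>q<n. V a j q = V ?b j q" if "j < 2*m" for j
    using that
  proof (induction j rule: less_induct)
    case (less j)
    show ?case
    proof (cases "j < m")
      case True
      then show ?thesis unfolding V_def by (auto intro!: sum.cong V_base)
    next
      case False
      then obtain j0 where j0: "j = j0 + m" "j0 < m" using less.prems
        by (metis add.commute le_add_diff_inverse not_less add_less_cancel_left mult_2)
      show ?thesis
      proof (intro allI impI)
        fix q assume q: "q < n"
        define S where "S i = (\<Sum>p<n. V ?b (j0+i) p * a (k+int j0) i $$ (p,q))" for i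
        have A: "V a j q = (\<Sum>i<m. S i)"
        proof -
          have "V a j q = (\<Sum>i<m. \<Sum>p<n. V a (j0+i) p * a (k+int j0) i $$ (p,q))"
            unfolding V_def j0 by (rule V_rec[OF q m0])
          also have "\<dots> = (\<Sum>i<m. S i)" unfolding S_def
            using less.IH j0 by (intro sum.cong refl) auto
          finally show ?thesis .
        qed
        have B: "V ?b j q = (\<Sum>i<m. (if odd i then \<mu> else 1) * S i)"
        proof -
          have "V ?b j q = (\<Sum>i<m. \<Sum>p<n. V ?b (j0+i) p * ?b (k+int j0) i $$ (p,q))"
            unfolding V_def j0 by (rule V_rec[OF q m0])
          also have "\<dots> = (\<Sum>i<m. (if odd i then \<mu> else 1) * S i)" unfolding S_def
            using q by (intro sum.cong refl) (simp add: scale_entry[OF carr] sum_distrib_left ac_simps)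
          finally show ?thesis .
        qed
        show "V a j q = V ?b j q"
        proof (cases "even j0")
          case True
          have "S i = 0" if "i < m" "odd i" for i
            unfolding S_def using zero[of "j0+i"] True that j0 by auto
          then show ?thesis unfolding A B by (intro sum.cong refl) auto
        next
          case False
          have S0: "S i = 0" if "i < m" "even i" for i
            unfolding S_def using zero[of "j0+i"] False that j0 by auto
          have "V ?b j q = 0" using zero[of j q] False j0 ev q by auto
          moreover have "(\<Sum>i<m. (if odd i then \<mu> else 1) * S i) = \<mu> * (\<Sum>i<m. S i)"
            unfolding sum_distrib_left using S0 by (intro sum.cong refl) auto
          ultimately show ?thesis unfolding A B using mu by simp
        qed
      qed
    qed
  qed
  have "transpose_mat ?Z *\<^sub>v v = 0\<^sub>v (m*n)"
  proof (rule eq_vecI)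
    fix t assume "t < dim_vec (0\<^sub>v (m*n) :: 'a vec)"
    then have t: "t < m*n" by simp
    have "(transpose_mat ?Z *\<^sub>v v) $ t = (\<Sum>r<m*n. v$r * ?Z $$ (r,t))"
      using v(1) t by (auto simp: scalar_prod_def atLeast0LessThan mult.commute intro!: sum.cong)
    also have "\<dots> = V a (2*(t div n)+1) (t mod n)"
      unfolding V_def using t by (intro sum.cong refl) (simp add: Zodd_def)
    also have "\<dots> = V ?b (2*(t div n)+1) (t mod n)"
    proof -
      have "t div n < m" using t by (simp add: less_mult_imp_div_less)
      then show ?thesis using eq[of "2*(t div n)+1"] n0 by auto
    qed
    also have "\<dots> = 0"
    proof -
      have "t div n < m" using t by (simp add: less_mult_imp_div_less)
      then show ?thesis using zero[of "2*(t div n)+1" "t mod n"] n0 by auto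
    qed
    finally show "(transpose_mat ?Z *\<^sub>v v) $ t = 0\<^sub>v (m*n) $ t" using t by simp
  qed simp
  then have "det (transpose_mat ?Z) = 0"
    using det_0_iff_vec_prod_zero_field[of "transpose_mat ?Z" "m*n"] v by auto
  then show False using dZ det_transpose[OF Zodd_carrier[of n m a k]] by simp
qed



definition Pm :: "nat \<Rightarrow> nat \<Rightarrow> (int \<Rightarrow> nat \<Rightarrow> 'a::field mat) \<Rightarrow> int \<Rightarrow> 'a mat" where
  "Pm n m a k = mat (m*n) (m*n) (\<lambda>(t,c). rho n m a k (c div n) t (c mod n))"
definition Rm :: "nat \<Rightarrow> nat \<Rightarrow> (int \<Rightarrow> nat \<Rightarrow> 'a::field mat) \<Rightarrow> int \<Rightarrow> 'a mat" where
  "Rm n m a k = mat (m*n) n (\<lambda>(t,c). rho n m a k m t c)"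

lemma Fmat_carrier[simp]: "Fmat n m a k l \<in> carrier_mat (m*n) n"
  unfolding Fmat_def by (rule mult_carrier_mat[OF Qprod_carrier rvec_carrier])

lemma Fmat_dims[simp]: "dim_row (Fmat n m a k l) = m*n" "dim_col (Fmat n m a k l) = n"
  by (simp_all add: Fmat_def carrier_matD[OF Qprod_carrier] carrier_matD[OF rvec_carrier])

lemma c_div: "c < m*n \<Longrightarrow> c div n < (m::nat)" by (simp add: less_mult_imp_div_less)

lemma N_eq: assumes "even m" shows "Nmat n m a k = Zodd n m a k * Pm n m a k"
proof (rule eq_matI)
  fix r c assume "r < dim_row (Zodd n m a k * Pm n m a k)" "c < dim_col (Zodd n m a k * Pm n m a k)"
  then have rc: "r < m*n" "c < m*n" by (auto simp: Pm_def)
  have n0: "0 < n" using rc by (cases n) auto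
  have cn: "c mod n < n" "c div n < m" using c_div rc n0 by auto
  have "Nmat n m a k $$ (r,c) = Fmat n m a k (c div n) $$ (r, c mod n)" using rc by (simp add: Nmat_def)
  also have "\<dots> = (\<Sum>t<m*n. Zodd n m a k $$ (r,t) * rho n m a k (c div n) t (c mod n))"
    using assms rc cn by (intro F_Z) auto
  also have "\<dots> = (Zodd n m a k * Pm n m a k) $$ (r,c)"
    using rc by (subst mult_entry[where nr="m*n" and nk="m*n" and nc="m*n"]) (auto simp: Pm_def intro!: sum.cong)
  finally show "Nmat n m a k $$ (r,c) = (Zodd n m a k * Pm n m a k) $$ (r,c)" .
qed (auto simp: Nmat_def Pm_def)

lemma F_eq: assumes "even m" shows "Fmat n m a k m = Zodd n m a k * Rm n m a k"
proof (rule eq_matI)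
  fix r c assume "r < dim_row (Zodd n m a k * Rm n m a k)" "c < dim_col (Zodd n m a k * Rm n m a k)"
  then have rc: "r < m*n" "c < n" by (auto simp: Rm_def)
  have "Fmat n m a k m $$ (r,c) = (\<Sum>t<m*n. Zodd n m a k $$ (r,t) * rho n m a k m t c)"
    using assms rc by (intro F_Z) auto
  also have "\<dots> = (Zodd n m a k * Rm n m a k) $$ (r,c)"
    using rc by (subst mult_entry[where nr="m*n" and nk="m*n" and nc="n"]) (auto simp: Rm_def intro!: sum.cong)
  finally show "Fmat n m a k m $$ (r,c) = (Zodd n m a k * Rm n m a k) $$ (r,c)" .
qed (insert Fmat_carrier[of n m a k m], auto simp: Rm_def)




definition Dg :: "nat \<Rightarrow> nat \<Rightarrow> 'a::field \<Rightarrow> 'a mat" where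
  "Dg n m \<mu> = mat (m*n) (m*n) (\<lambda>(i,j). if i = j then (if even (j div n) then \<mu> else 1) else 0)"

lemma Dg_det: "\<mu> \<noteq> 0 \<Longrightarrow> det (Dg n m \<mu>) \<noteq> 0"
proof -
  assume mu: "\<mu> \<noteq> 0"
  have "upper_triangular (Dg n m \<mu>)" by (simp add: upper_triangular_def Dg_def)
  then have "det (Dg n m \<mu>) = prod_list (diag_mat (Dg n m \<mu>))"
    by (rule det_upper_triangular[where n="m*n"]) (simp add: Dg_def)
  also have "\<dots> = (\<Prod>i = 0..<m*n. Dg n m \<mu> $$ (i,i))" by (simp add: prod_list_diag_prod Dg_def)
  also have "\<dots> \<noteq> 0" using mu by (simp add: Dg_def)
  finally show ?thesis .
qed

lemma P_scale: assumes carr: "\<And>j i. i < m \<Longrightarrow> a j i \<in> carrier_mat n n"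
  shows "Pm n m (scale_odd \<mu> a) k = Pm n m a k * Dg n m \<mu>"
proof (rule eq_matI)
  fix t c assume "t < dim_row (Pm n m a k * Dg n m \<mu>)" "c < dim_col (Pm n m a k * Dg n m \<mu>)"
  then have tc: "t < m*n" "c < m*n" by (auto simp: Pm_def Dg_def)
  have n0: "0 < n" using tc by (cases n) auto
  have "(Pm n m a k * Dg n m \<mu>) $$ (t,c) = (\<Sum>s<m*n. Pm n m a k $$ (t,s) * Dg n m \<mu> $$ (s,c))"
    using tc by (intro mult_entry[where nr="m*n" and nk="m*n" and nc="m*n"]) (auto simp: Pm_def Dg_def)
  also have "\<dots> = (\<Sum>s<m*n. if s = c then Pm n m a k $$ (t,c) * (if even (c div n) then \<mu> else 1) else 0)"
    using tc by (intro sum.cong refl) (auto simp: Dg_def)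
  also have "\<dots> = Pm n m a k $$ (t,c) * (if even (c div n) then \<mu> else 1)" using tc by simp
  also have "\<dots> = Pm n m (scale_odd \<mu> a) k $$ (t,c)"
    using tc n0 rho_scale[OF carr, where t=t and c="c mod n" and \<mu>=\<mu> and k=k and l="c div n"] by (simp add: Pm_def)
  finally show "Pm n m (scale_odd \<mu> a) k $$ (t,c) = (Pm n m a k * Dg n m \<mu>) $$ (t,c)" by simp
qed (auto simp: Pm_def Dg_def)




lemma Pm_carrier[simp]: "Pm n m a k \<in> carrier_mat (m*n) (m*n)" by (simp add: Pm_def)
lemma Rm_carrier[simp]: "Rm n m a k \<in> carrier_mat (m*n) n" by (simp add: Rm_def)
lemma Dg_carrier[simp]: "Dg n m \<mu> \<in> carrier_mat (m*n) (m*n)" by (simp add: Dg_def)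

theorem mainTheorem4:
  fixes n s m Np :: nat and a :: "int \<Rightarrow> nat \<Rightarrow> 'a::field mat" and k :: int
    and \<mu> :: 'a and C :: "'a mat"
  assumes "n \<ge> 1" and "s \<ge> 2" and "m = 2 * s" and "Np \<ge> 1"
    and "\<And>j i. i < m \<Longrightarrow> a j i \<in> carrier_mat n n"
    and "\<And>j i. a (j + int Np) i = a j i"
    and "invertible_mat (Nmat n m a k)"
    and "C \<in> carrier_mat (m*n) n" and "Nmat n m a k * C = Fmat n m a k m"
    and "\<mu> \<noteq> 0"
  shows "invertible_mat (Nmat n m (scale_odd \<mu> a) k) \<and>
    (\<forall>C'. C' \<in> carrier_mat (m*n) n \<and>
          Nmat n m (scale_odd \<mu> a) k * C' = Fmat n m (scale_odd \<mu> a) k m \<longrightarrow>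
      (\<forall>l < s. blk n C' (2*l) = blk n C (2*l) \<and>
               blk n C' (2*l+1) = \<mu> \<cdot>\<^sub>m blk n C (2*l+1)))"
proof -
  note carr = assms(5)
  have ev: "even m" and m0: "0 < m" and n0: "0 < n" using assms(1-3) by auto
  define b where "b = scale_odd \<mu> a"
  define Z where "Z = Zodd n m a k"
  define P where "P = Pm n m a k"
  define R where "R = Rm n m a k"
  define Z' where "Z' = Zodd n m b k"
  define P' where "P' = Pm n m b k"
  define R' where "R' = Rm n m b k"
  have cZ: "Z \<in> carrier_mat (m*n) (m*n)" "Z' \<in> carrier_mat (m*n) (m*n)"
    and cP: "P \<in> carrier_mat (m*n) (m*n)" "P' \<in> carrier_mat (m*n) (m*n)"
    and cR: "R \<in> carrier_mat (m*n) n" "R' \<in> carrier_mat (m*n) n"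
    by (simp_all add: Z_def Z'_def P_def P'_def R_def R'_def)
  have N: "Nmat n m a k = Z * P" "Nmat n m b k = Z' * P'"
    using N_eq[OF ev] by (simp_all add: Z_def P_def Z'_def P'_def)
  have F: "Fmat n m a k m = Z * R" "Fmat n m b k m = Z' * R'"
    using F_eq[OF ev] by (simp_all add: Z_def R_def Z'_def R'_def)
  have cN: "Z * P \<in> carrier_mat (m*n) (m*n)" "Z' * P' \<in> carrier_mat (m*n) (m*n)" using cZ cP by auto
  have "det (Z*P) \<noteq> 0" using inv_det[OF cN(1)] assms(7) N by simp
  then have dZ: "det Z \<noteq> 0" and dP: "det P \<noteq> 0" using det_mult[OF cZ(1) cP(1)] by auto
  have PC: "P * C = R"
  proof (rule inv_cancel[OF cZ(1) det_inv[OF cZ(1) dZ]])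
    show "P * C \<in> carrier_mat (m*n) n" using cP assms(8) by auto
    show "R \<in> carrier_mat (m*n) n" by (rule cR)
    have "Z * (P * C) = (Z * P) * C" using cZ cP assms(8) by (simp add: assoc_mult_mat)
    also have "\<dots> = Z * R" using assms(9) N F by simp
    finally show "Z * (P * C) = Z * R" .
  qed
  have dZ': "det Z' \<noteq> 0" unfolding Z'_def b_def using Z_nonsing[OF carr ev m0 n0 assms(10)] dZ Z_def by simp
  have "P' = P * Dg n m \<mu>" unfolding P'_def P_def b_def by (rule P_scale[OF carr])
  then have dP': "det P' \<noteq> 0" using det_mult[OF cP(1) Dg_carrier, of \<mu>] dP Dg_det[OF assms(10), of n m] by simp
  have invN': "invertible_mat (Z' * P')"
    using det_inv[OF cN(2)] det_mult[OF cZ(2) cP(2)] dZ' dP' by simp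
  define C'' where "C'' = mat (m*n) n (\<lambda>(t,c). (if odd (t div n) then \<mu> else 1) * C $$ (t,c))"
  have cC'': "C'' \<in> carrier_mat (m*n) n" by (simp add: C''_def)
  have PC'': "P' * C'' = R'"
  proof (rule eq_matI)
    fix t c assume "t < dim_row R'" "c < dim_col R'"
    then have tc: "t < m*n" "c < n" using cR by auto
    have "(P' * C'') $$ (t,c) = (\<Sum>s<m*n. P' $$ (t,s) * C'' $$ (s,c))"
      using tc by (intro mult_entry[OF cP(2) cC'']) auto
    also have "\<dots> = (\<Sum>s<m*n. \<mu> * (P $$ (t,s) * C $$ (s,c)))"
    proof (intro sum.cong refl)
      fix s assume "s \<in> {..<m*n}"
      then have sl: "s < m*n" by simp
      then have "s mod n < n" "s div n < m" using n0 by (auto simp: c_div)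
      then have "P' $$ (t,s) = (if even (s div n) then \<mu> else 1) * P $$ (t,s)"
        using tc sl rho_scale[OF carr, where t=t and c="s mod n" and \<mu>=\<mu> and k=k and l="s div n"]
        by (simp add: P'_def P_def Pm_def b_def)
      then show "P' $$ (t,s) * C'' $$ (s,c) = \<mu> * (P $$ (t,s) * C $$ (s,c))"
        using sl tc by (auto simp: C''_def)
    qed
    also have "\<dots> = \<mu> * (P * C) $$ (t,c)"
      using tc by (simp add: sum_distrib_left mult_entry[OF cP(1) assms(8)])
    also have "\<dots> = R' $$ (t,c)"
      using tc ev rho_scale[OF carr, where t=t and c=c and \<mu>=\<mu> and k=k and l=m]
      by (simp add: PC R_def R'_def Rm_def b_def)
    finally show "(P' * C'') $$ (t,c) = R' $$ (t,c)" .
  qed (use cP cR cC'' in auto)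
  have NC'': "(Z' * P') * C'' = Z' * R'"
    using cZ cP cC'' PC'' by (simp add: assoc_mult_mat)
  show ?thesis
  proof (intro conjI allI impI)
    show "invertible_mat (Nmat n m (scale_odd \<mu> a) k)" using invN' N b_def by simp
    fix C' assume H: "C' \<in> carrier_mat (m*n) n \<and> Nmat n m (scale_odd \<mu> a) k * C' = Fmat n m (scale_odd \<mu> a) k m"
    have "C' = C''"
      by (rule inv_cancel[OF cN(2) invN']) (use H N F NC'' cC'' b_def in auto)
    fix l assume l: "l < s"
    show "blk n C' (2*l) = blk n C (2*l)"
    proof (rule eq_matI)
      fix p q assume "p < dim_row (blk n C (2*l))" "q < dim_col (blk n C (2*l))"
      then have pq: "p < n" "q < n" by (auto simp: blk_def)
      have "2*l*n+p < m*n" using l pq assms(3) by (intro blk_lt) auto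
      then show "blk n C' (2*l) $$ (p,q) = blk n C (2*l) $$ (p,q)"
        using pq divmod_blk[of p n "2*l"] \<open>C' = C''\<close> by (simp add: blk_def C''_def)
    qed (auto simp: blk_def)
    show "blk n C' (2*l+1) = \<mu> \<cdot>\<^sub>m blk n C (2*l+1)"
    proof (rule eq_matI)
      fix p q assume "p < dim_row (\<mu> \<cdot>\<^sub>m blk n C (2*l+1))" "q < dim_col (\<mu> \<cdot>\<^sub>m blk n C (2*l+1))"
      then have pq: "p < n" "q < n" by (auto simp: blk_def)
      have "(2*l+1)*n+p < m*n" using l pq assms(3) by (intro blk_lt) auto
      then show "blk n C' (2*l+1) $$ (p,q) = (\<mu> \<cdot>\<^sub>m blk n C (2*l+1)) $$ (p,q)"
        using pq divmod_blk[of p n "2*l+1"] \<open>C' = C''\<close> by (simp add: blk_def C''_def)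
    qed (auto simp: blk_def)
  qed
qed

end
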